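(* Let $D \in \mathbb{N}$, let $X, Y \subset \mathbb{R}^D$ be finite sets, and let $\mathcal{N}$ be a family of functions $\mathbb{R}^D \to \mathbb{R}$ having the universal approximation property (UAP). If $$\sum_{x \in X} \tau(x) = \sum_{y \in Y} \tau(y) \quad \text{for every } \tau \in \mathcal{N},$$ then $X = Y$.
   Context: A family $\mathcal{N}$ of functions $\mathbb{R}^D \to \mathbb{R}$ has the universal approximation property (UAP) if for every compact set $K \subset \mathbb{R}^D$, every continuous function $f : K \to \mathbb{R}$ and every $\varepsilon > 0$ there is a function $g \in \mathrm{span}(\mathcal{N})$ (a finite linear combination of elements of $\mathcal{N}$) with $\sup_{x \in K} |f(x) - g(x)| \le \varepsilon$. For a function $\tau$ and a finite set $X$, the paper writes $\tau(X)$ for the aggregated value $\sum_{x \in X} \tau(x)$. *)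

theory Defs
  imports "HOL-Analysis.Analysis"
begin

definition has_UAP :: "(real ^ 'n \<Rightarrow> real) set \<Rightarrow> bool" where
  "has_UAP N \<longleftrightarrow>
     (\<forall>K f \<epsilon>. compact K \<longrightarrow> continuous_on K f \<longrightarrow> \<epsilon> > 0 \<longrightarrow>
        (\<exists>S c. finite S \<and> S \<subseteq> N \<and>
           (\<forall>x \<in> K. \<bar>f x - (\<Sum>\<tau>\<in>S. c \<tau> * \<tau> x)\<bar> \<le> \<epsilon>)))"

end

theory Submission
  imports Defs
begin

lemma subset_dir:
  fixes N :: "(real ^ 'n \<Rightarrow> real) set" and X Y :: "(real ^ 'n) set"
  assumes fX: "finite X" and fY: "finite Y"
    and U: "has_UAP N"
    and E: "\<forall>\<tau> \<in> N. (\<Sum>x\<in>X. \<tau> x) = (\<Sum>y\<in>Y. \<tau> y)"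
  shows "X \<subseteq> Y"
proof (rule ccontr)
  assume "\<not> X \<subseteq> Y"
  then obtain p where pX: "p \<in> X" and pY: "p \<notin> Y" by blast
  define K where "K = X \<union> Y"
  define f :: "real ^ 'n \<Rightarrow> real" where "f x = (if x = p then 1 else 0)" for x
  define e :: real where "e = 1 / (2 * (real (card X) + real (card Y) + 1))"
  have e0: "e > 0" unfolding e_def by simp
  have cK: "compact K" unfolding K_def using fX fY by (simp add: finite_imp_compact)
  have cf: "continuous_on K f" unfolding K_def using fX fY by (simp add: continuous_on_finite)
  obtain S c where S: "finite S" "S \<subseteq> N"
    and app: "\<forall>x\<in>K. \<bar>f x - (\<Sum>\<tau>\<in>S. c \<tau> * \<tau> x)\<bar> \<le> e"
    using U[unfolded has_UAP_def, rule_format, OF cK cf e0] by blast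
  define g where "g x = (\<Sum>\<tau>\<in>S. c \<tau> * \<tau> x)" for x
  have sg: "(\<Sum>x\<in>X. g x) = (\<Sum>y\<in>Y. g y)"
  proof -
    have "(\<Sum>x\<in>X. g x) = (\<Sum>\<tau>\<in>S. c \<tau> * (\<Sum>x\<in>X. \<tau> x))"
      unfolding g_def by (simp add: sum.swap[of _ X] sum_distrib_left)
    also have "\<dots> = (\<Sum>\<tau>\<in>S. c \<tau> * (\<Sum>y\<in>Y. \<tau> y))"
      using S E by (intro sum.cong) auto
    also have "\<dots> = (\<Sum>y\<in>Y. g y)"
      unfolding g_def by (simp add: sum.swap[of _ Y] sum_distrib_left)
    finally show ?thesis .
  qed
  have fsX: "(\<Sum>x\<in>X. f x) = 1"
  proof -
    have "(\<Sum>x\<in>X. f x) = (\<Sum>x\<in>X. if x = p then 1 else 0)" unfolding f_def by simp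
    also have "\<dots> = 1" using fX pX by (simp add: sum.delta)
    finally show ?thesis .
  qed
  have fsY: "(\<Sum>y\<in>Y. f y) = 0" unfolding f_def using pY by (intro sum.neutral) auto
  have bX: "\<bar>(\<Sum>x\<in>X. f x) - (\<Sum>x\<in>X. g x)\<bar> \<le> real (card X) * e"
  proof -
    have "\<bar>(\<Sum>x\<in>X. f x) - (\<Sum>x\<in>X. g x)\<bar> = \<bar>\<Sum>x\<in>X. f x - g x\<bar>"
      by (simp add: sum_subtractf)
    also have "\<dots> \<le> (\<Sum>x\<in>X. \<bar>f x - g x\<bar>)" by (rule sum_abs)
    also have "\<dots> \<le> (\<Sum>x\<in>X. e)" using app unfolding K_def g_def
      by (intro sum_mono) auto
    finally show ?thesis by simp
  qed
  have bY: "\<bar>(\<Sum>x\<in>Y. f x) - (\<Sum>x\<in>Y. g x)\<bar> \<le> real (card Y) * e"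
  proof -
    have "\<bar>(\<Sum>x\<in>Y. f x) - (\<Sum>x\<in>Y. g x)\<bar> = \<bar>\<Sum>x\<in>Y. f x - g x\<bar>"
      by (simp add: sum_subtractf)
    also have "\<dots> \<le> (\<Sum>x\<in>Y. \<bar>f x - g x\<bar>)" by (rule sum_abs)
    also have "\<dots> \<le> (\<Sum>x\<in>Y. e)" using app unfolding K_def g_def
      by (intro sum_mono) auto
    finally show ?thesis by simp
  qed
  have "1 \<le> (real (card X) + real (card Y)) * e"
    using bX bY sg fsX fsY unfolding distrib_right by linarith
  moreover have "(real (card X) + real (card Y)) * e < 1"
    unfolding e_def by (simp add: field_simps)
  ultimately show False by linarith
qed

theorem theorem1:
  fixes N :: "(real ^ 'n \<Rightarrow> real) set" and X Y :: "(real ^ 'n) set"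
  assumes "finite X" and "finite Y"
    and "has_UAP N"
    and "\<forall>\<tau> \<in> N. (\<Sum>x\<in>X. \<tau> x) = (\<Sum>y\<in>Y. \<tau> y)"
  shows "X = Y"
  using subset_dir[OF assms] subset_dir[of Y X N] assms by auto

end
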